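(* Let $\lambda>0$, let $\gamma\ge0$, and let $Z_s\in\mathbb{R}^{1\times(n+m)}$ be row vectors with $\|Z_s\|_2\le1+\gamma$. Let $\Theta^*_s\in\mathbb{R}^{(n+m)\times n}$ satisfy $\sum_{s=1}^{H-1}\|\Theta^*_{s+1}-\Theta^*_s\|_F\le\mathcal{B}_H$. Let $h_0\le h$ lie in the same restart epoch of size $L$ (so $h-h_0\le L$). Then for any $h\in[H]$, \[ \Big\|\Big(\sum_{s=h_0}^{h-1}Z_s^\top Z_s+\lambda I\Big)^{-1}\Big(\sum_{s=h_0}^{h-1}Z_s^\top Z_s(\Theta^*_s-\Theta^*_h)\Big)\Big\|_F\le(1+\gamma)\sqrt{\tfrac{L(m+n)}{\lambda}}\,\mathcal{B}_H. \]
   Context: In the paper, $Z_s=[x_s^\top,u_s^\top]$ for the states and controls of a time-varying linear system $x_{s+1}=A_sx_s+B_su_s+w_s$ with $\Theta^*_s=[A_s,B_s]^\top$, the bound $\|Z_s\|_2\le1+\gamma$ holds with $\gamma$ a bound on the control norms $\|u_s\|_2$ (states having norm at most $1$), and $h_0$ is the start of the current epoch of the restarting strategy with epoch length $L$. *)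

theory Defs
  imports "HOL-Analysis.Analysis"
begin

definition outer :: "real^'d \<Rightarrow> real^'d^'d" where
  "outer z = (\<chi> i j. z $ i * z $ j)"

definition frob_norm :: "real^'c^'r \<Rightarrow> real" where
  "frob_norm M = sqrt (\<Sum>i\<in>UNIV. \<Sum>j\<in>UNIV. (M $ i $ j)^2)"

end

theory Submission
  imports Defs
begin

lemma norm_sq_vec: "(norm (x::real^'c))^2 = (\<Sum>i\<in>UNIV. (x$i)^2)"
  unfolding norm_vec_def L2_set_def by (simp add: sum_nonneg)

lemma frob_norm_eq: "frob_norm (M::real^'c^'r) = norm M"
  unfolding frob_norm_def norm_vec_def L2_set_def
  by (simp add: norm_sq_vec[symmetric])

lemma frob_sq: "(frob_norm (M::real^'c^'r))^2 = (\<Sum>i\<in>UNIV. \<Sum>j\<in>UNIV. (M $ i $ j)^2)"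
  unfolding frob_norm_def by (simp add: sum_nonneg)

lemma V_entry: "((\<Sum>s\<in>S. outer (Z s)) + lam *\<^sub>R mat 1) $ a $ b
   = (\<Sum>s\<in>S. (Z s :: real^'d)$a * Z s$b) + (if a = b then lam else 0)"
  by (simp add: outer_def mat_def)

lemma N_entry: "(\<Sum>s\<in>S. outer (Z s) ** (D s :: real^'n^'d)) $ a $ j
   = (\<Sum>s\<in>S. (Z s :: real^'d)$a * (\<Sum>b\<in>UNIV. Z s$b * D s$b$j))"
  by (simp add: matrix_matrix_mult_def outer_def sum_distrib_left mult.assoc)

lemma delta_sum: "(\<Sum>b\<in>UNIV. (f b::real) * (if (a::'a::finite) = b then lam else 0)) = lam * f a"
proof -
  have "(\<Sum>b\<in>UNIV. (f b::real) * (if a = b then lam else 0)) = (\<Sum>b\<in>UNIV. if a = b then f b * lam else 0)"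
    by (rule sum.cong) auto
  also have "\<dots> = lam * f a" using sum.delta'[of UNIV a "\<lambda>b. f b * lam"] by (simp add: mult.commute)
  finally show ?thesis .
qed

lemma delta_sum2: "(\<Sum>b\<in>UNIV. (f b::real) * (if b = (a::'a::finite) then lam else 0)) = lam * f a"
  using delta_sum[of f a lam] by (simp add: eq_commute)

lemma quad:
  fixes y e :: "'d::finite \<Rightarrow> real" and Z :: "nat \<Rightarrow> real^'d"
  assumes "\<And>a. (\<Sum>s\<in>S. Z s$a * (\<Sum>b\<in>UNIV. Z s$b * y b)) + lam * y a = e a"
  shows "(\<Sum>s\<in>S. (\<Sum>b\<in>UNIV. Z s$b * y b)^2) + lam * (\<Sum>a\<in>UNIV. (y a)^2) = (\<Sum>a\<in>UNIV. y a * e a)"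
proof -
  have "(\<Sum>a\<in>UNIV. y a * e a) = (\<Sum>a\<in>UNIV. y a * (\<Sum>s\<in>S. Z s$a * (\<Sum>b\<in>UNIV. Z s$b * y b)) + lam * (y a)^2)"
    apply (rule sum.cong, simp)
    apply (subst assms[symmetric])
    by (simp add: algebra_simps power2_eq_square)
  also have "\<dots> = (\<Sum>a\<in>UNIV. y a * (\<Sum>s\<in>S. Z s$a * (\<Sum>b\<in>UNIV. Z s$b * y b))) + lam * (\<Sum>a\<in>UNIV. (y a)^2)"
    by (simp add: sum.distrib sum_distrib_left)
  also have "(\<Sum>a\<in>UNIV. y a * (\<Sum>s\<in>S. Z s$a * (\<Sum>b\<in>UNIV. Z s$b * y b)))
      = (\<Sum>s\<in>S. (\<Sum>a\<in>UNIV. Z s$a * y a) * (\<Sum>b\<in>UNIV. Z s$b * y b))"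
    unfolding sum_distrib_left sum_distrib_right
    by (subst sum.swap) (simp add: algebra_simps)
  finally show ?thesis by (simp add: power2_eq_square)
qed

lemma quad_bound: "(lam::real) > 0 \<Longrightarrow> t - lam * t^2 \<le> 1 / (4 * lam)"
proof -
  assume l: "lam > 0"
  have "4 * lam * (t - lam * t^2) \<le> 1"
    using zero_le_power2[of "2 * lam * t - 1"] by (simp add: power2_eq_square algebra_simps)
  then show ?thesis using l by (simp add: field_simps)
qed

theorem lemma6:
  fixes lam \<gamma> BH :: real
    and Z :: "nat \<Rightarrow> real^'d"
    and \<Theta> :: "nat \<Rightarrow> real^'n^'d"
    and n m H L h0 h :: nat
  assumes "lam > 0" and "\<gamma> \<ge> 0"
    and "\<forall>s. norm (Z s) \<le> 1 + \<gamma>"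
    and "CARD('n) = n" and "CARD('d) = n + m"
    and "(\<Sum>s=1..H-1. frob_norm (\<Theta> (s+1) - \<Theta> s)) \<le> BH"
    and "h \<in> {1..H}" and "1 \<le> h0" and "h0 \<le> h" and "h - h0 \<le> L"
  shows "frob_norm (matrix_inv ((\<Sum>s=h0..<h. outer (Z s)) + lam *\<^sub>R mat 1)
            ** (\<Sum>s=h0..<h. outer (Z s) ** (\<Theta> s - \<Theta> h)))
         \<le> (1 + \<gamma>) * sqrt (real L * real (m + n) / lam) * BH"
proof -
  note lam = assms(1)
  define S where "S = {h0..<h}"
  define V where "V = (\<Sum>s\<in>S. outer (Z s)) + lam *\<^sub>R mat 1"
  define X where "X = matrix_inv V"
  define D where "D = (\<lambda>s. \<Theta> s - \<Theta> h)"
  define N where "N = (\<Sum>s\<in>S. outer (Z s) ** D s)"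
  define M where "M = X ** N"
  define w where "w = (\<lambda>s j. \<Sum>b\<in>UNIV. Z s$b * D s$b$j)"
  define c where "c = (\<lambda>i s. \<Sum>a\<in>UNIV. Z s$a * X$i$a)"
  have goal_eq: "frob_norm (matrix_inv ((\<Sum>s=h0..<h. outer (Z s)) + lam *\<^sub>R mat 1)
            ** (\<Sum>s=h0..<h. outer (Z s) ** (\<Theta> s - \<Theta> h))) = frob_norm M"
    by (simp add: M_def X_def V_def N_def S_def D_def)
  have Vent: "V$a$b = (\<Sum>s\<in>S. Z s$a * Z s$b) + (if a = b then lam else 0)" for a b
    unfolding V_def by (rule V_entry)
  have ker: "\<forall>x. V *v x = 0 \<longrightarrow> x = 0"
  proof (intro allI impI)
    fix x :: "real^'d"
    assume V0: "V *v x = 0"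
    have "(\<Sum>s\<in>S. Z s$a * (\<Sum>b\<in>UNIV. Z s$b * x$b)) + lam * x$a = 0" for a
    proof -
      have "0 = (V *v x)$a" using V0 by simp
      also have "\<dots> = (\<Sum>b\<in>UNIV. ((\<Sum>s\<in>S. Z s$a * Z s$b) + (if a = b then lam else 0)) * x$b)"
        by (simp add: matrix_vector_mult_def Vent)
      also have "\<dots> = (\<Sum>b\<in>UNIV. (\<Sum>s\<in>S. Z s$a * Z s$b) * x$b) + (\<Sum>b\<in>UNIV. (if a = b then lam else 0) * x$b)"
        by (simp add: sum.distrib algebra_simps)
      also have "\<dots> = (\<Sum>s\<in>S. Z s$a * (\<Sum>b\<in>UNIV. Z s$b * x$b)) + lam * x$a"
        unfolding sum_distrib_left sum_distrib_right
        by (subst sum.swap) (simp add: algebra_simps delta_sum delta_sum2)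
      finally show ?thesis by simp
    qed
    from quad[where S=S and Z=Z and y="\<lambda>b. x$b" and lam=lam and e="\<lambda>_. 0", OF this]
    have "(\<Sum>s\<in>S. (\<Sum>b\<in>UNIV. Z s$b * x$b)^2) + lam * (\<Sum>a\<in>UNIV. (x$a)^2) = 0" by simp
    moreover have "(\<Sum>s\<in>S. (\<Sum>b\<in>UNIV. Z s$b * x$b)^2) \<ge> 0" by (simp add: sum_nonneg)
    moreover have "(\<Sum>a\<in>UNIV. (x$a)^2) \<ge> 0" by (simp add: sum_nonneg)
    ultimately have "(\<Sum>a\<in>UNIV. (x$a)^2) = 0" using lam
      by (smt (verit) mult_pos_pos mult_nonneg_nonneg)
    then have "(norm x)^2 = 0" by (simp add: norm_sq_vec)
    then show "x = 0" by simp
  qed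
  have inv: "invertible V"
    using ker unfolding invertible_left_inverse matrix_left_invertible_ker[symmetric] .
  have XV: "X ** V = mat 1"
    using inv unfolding X_def invertible_def matrix_inv_def by (rule someI2_ex) auto
  have cbound: "(\<Sum>s\<in>S. (c i s)^2) \<le> 1 / (4 * lam)" for i
  proof -
    have "(\<Sum>s\<in>S. Z s$b * (\<Sum>a\<in>UNIV. Z s$a * X$i$a)) + lam * X$i$b = (if b = i then 1 else 0)" for b
    proof -
      have "(if i = b then 1 else 0) = (X ** V)$i$b" using XV by (simp add: mat_def)
      also have "\<dots> = (\<Sum>a\<in>UNIV. X$i$a * ((\<Sum>s\<in>S. Z s$a * Z s$b) + (if a = b then lam else 0)))"
        by (simp add: matrix_matrix_mult_def Vent)
      also have "\<dots> = (\<Sum>a\<in>UNIV. X$i$a * (\<Sum>s\<in>S. Z s$a * Z s$b)) + (\<Sum>a\<in>UNIV. X$i$a * (if a = b then lam else 0))"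
        by (simp add: sum.distrib algebra_simps)
      also have "\<dots> = (\<Sum>s\<in>S. Z s$b * (\<Sum>a\<in>UNIV. Z s$a * X$i$a)) + lam * X$i$b"
        unfolding sum_distrib_left sum_distrib_right
        by (subst sum.swap) (simp add: algebra_simps delta_sum delta_sum2)
      finally show ?thesis by (auto split: if_splits)
    qed
    from quad[where S=S and Z=Z and y="\<lambda>a. X$i$a" and lam=lam and e="\<lambda>b. if b = i then 1 else 0", OF this]
    have q: "(\<Sum>s\<in>S. (c i s)^2) + lam * (\<Sum>a\<in>UNIV. (X$i$a)^2) = X$i$i"
      by (simp add: c_def mult.commute if_distrib cong: if_cong)
    have "(X$i$i)^2 \<le> (\<Sum>a\<in>UNIV. (X$i$a)^2)"
      by (rule member_le_sum) auto
    then have "(\<Sum>s\<in>S. (c i s)^2) \<le> X$i$i - lam * (X$i$i)^2"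
      using q lam by (smt (verit) mult_left_mono)
    also have "\<dots> \<le> 1 / (4 * lam)" by (rule quad_bound[OF lam])
    finally show ?thesis .
  qed
  have Ment: "M$i$j = (\<Sum>s\<in>S. c i s * w s j)" for i j
  proof -
    have "M$i$j = (\<Sum>a\<in>UNIV. X$i$a * (\<Sum>s\<in>S. Z s$a * w s j))"
      proof -
      have "N$a$j = (\<Sum>s\<in>S. Z s$a * w s j)" for a
        unfolding N_def w_def by (rule N_entry)
      then show ?thesis unfolding M_def matrix_matrix_mult_def by simp
    qed
    also have "\<dots> = (\<Sum>s\<in>S. c i s * w s j)"
      unfolding c_def sum_distrib_left sum_distrib_right
      by (subst sum.swap) (simp add: algebra_simps)
    finally show ?thesis .
  qed
  have Mrow: "(M$i$j)^2 \<le> 1 / (4 * lam) * (\<Sum>s\<in>S. (w s j)^2)" for i j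
  proof -
    have "(M$i$j)^2 \<le> (\<Sum>s\<in>S. (c i s)^2) * (\<Sum>s\<in>S. (w s j)^2)"
      unfolding Ment by (rule Cauchy_Schwarz_ineq_sum)
    also have "\<dots> \<le> 1 / (4 * lam) * (\<Sum>s\<in>S. (w s j)^2)"
      by (rule mult_right_mono[OF cbound]) (simp add: sum_nonneg)
    finally show ?thesis .
  qed
  have BH0: "BH \<ge> 0"
  proof -
    have "0 \<le> (\<Sum>s=1..H-1. frob_norm (\<Theta> (s+1) - \<Theta> s))"
      by (simp add: frob_norm_eq sum_nonneg)
    then show ?thesis using assms(6) by linarith
  qed
  have Dbound: "frob_norm (D s) \<le> BH" if "s \<in> S" for s
  proof -
    have sh: "h0 \<le> s" "s < h" using that by (auto simp: S_def)
    have "\<Theta> h - \<Theta> s = (\<Sum>p=s..<h. \<Theta> (Suc p) - \<Theta> p)"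
      using sh by (simp add: sum_Suc_diff')
    then have "frob_norm (D s) = norm (\<Sum>p=s..<h. \<Theta> (Suc p) - \<Theta> p)"
      by (simp add: D_def frob_norm_eq norm_minus_commute)
    also have "\<dots> \<le> (\<Sum>p=s..<h. norm (\<Theta> (Suc p) - \<Theta> p))"
      by (rule norm_sum)
    also have "\<dots> \<le> (\<Sum>p=1..H-1. norm (\<Theta> (Suc p) - \<Theta> p))"
      by (rule sum_mono2) (use sh assms(7,8) in auto)
    also have "\<dots> \<le> BH" using assms(6) by (simp add: frob_norm_eq)
    finally show ?thesis .
  qed
  have wbound: "(\<Sum>j\<in>UNIV. (w s j)^2) \<le> (1 + \<gamma>)^2 * BH^2" if "s \<in> S" for s
  proof -
    have "(\<Sum>j\<in>UNIV. (w s j)^2) \<le> (\<Sum>j\<in>UNIV. (\<Sum>b\<in>UNIV. (Z s$b)^2) * (\<Sum>b\<in>UNIV. (D s$b$j)^2))"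
      unfolding w_def by (rule sum_mono) (rule Cauchy_Schwarz_ineq_sum)
    also have "\<dots> = (norm (Z s))^2 * (frob_norm (D s))^2"
      by (simp add: norm_sq_vec frob_sq sum_distrib_left) (subst sum.swap, rule refl)
    also have "\<dots> \<le> (1 + \<gamma>)^2 * BH^2"
      apply (rule mult_mono)
      using assms(3) Dbound[OF that] by (auto intro!: power_mono simp: frob_norm_eq)
    finally show ?thesis .
  qed
  have "(frob_norm M)^2 = (\<Sum>i\<in>UNIV. \<Sum>j\<in>UNIV. (M $ i $ j)^2)" by (rule frob_sq)
  also have "\<dots> \<le> (\<Sum>i\<in>(UNIV::'d set). 1 / (4 * lam) * (\<Sum>s\<in>S. \<Sum>j\<in>UNIV. (w s j)^2))"
  proof (rule sum_mono)
    fix i :: 'd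
    have "(\<Sum>j\<in>UNIV. (M $ i $ j)^2) \<le> (\<Sum>j\<in>UNIV. 1 / (4 * lam) * (\<Sum>s\<in>S. (w s j)^2))"
      by (rule sum_mono) (rule Mrow)
    also have "\<dots> = 1 / (4 * lam) * (\<Sum>s\<in>S. \<Sum>j\<in>UNIV. (w s j)^2)"
      unfolding sum_distrib_left[symmetric] by (subst sum.swap) (rule refl)
    finally show "(\<Sum>j\<in>UNIV. (M $ i $ j)^2) \<le> 1 / (4 * lam) * (\<Sum>s\<in>S. \<Sum>j\<in>UNIV. (w s j)^2)" .
  qed
  also have "\<dots> \<le> (\<Sum>i\<in>(UNIV::'d set). 1 / (4 * lam) * (real L * ((1 + \<gamma>)^2 * BH^2)))"
  proof (rule sum_mono, rule mult_left_mono)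
    have "(\<Sum>s\<in>S. \<Sum>j\<in>UNIV. (w s j)^2) \<le> (\<Sum>s\<in>S. (1 + \<gamma>)^2 * BH^2)"
      by (rule sum_mono) (rule wbound)
    also have "\<dots> = real (card S) * ((1 + \<gamma>)^2 * BH^2)" by simp
    also have "\<dots> \<le> real L * ((1 + \<gamma>)^2 * BH^2)"
      by (rule mult_right_mono) (use assms(10) in \<open>auto simp: S_def\<close>)
    finally show "(\<Sum>s\<in>S. \<Sum>j\<in>UNIV. (w s j)^2) \<le> real L * ((1 + \<gamma>)^2 * BH^2)" .
  qed (use lam in simp)
  also have "\<dots> = real (m + n) / (4 * lam) * real L * (1 + \<gamma>)^2 * BH^2"
    using assms(5) by (simp add: add.commute)
  also have "\<dots> \<le> ((1 + \<gamma>) * sqrt (real L * real (m + n) / lam) * BH)^2"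
    using lam assms(2) by (simp add: power_mult_distrib divide_simps real_sqrt_pow2)
  finally have "(frob_norm M)^2 \<le> ((1 + \<gamma>) * sqrt (real L * real (m + n) / lam) * BH)^2" .
  then have "frob_norm M \<le> (1 + \<gamma>) * sqrt (real L * real (m + n) / lam) * BH"
    by (rule power2_le_imp_le) (use assms(2) BH0 lam in simp)
  then show ?thesis using goal_eq by simp
qed

end
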